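(* Let $(X,d^\star)$ be a $\star$-metric space. If the topological space $(X,\mathscr{T}_{d^\star})$ is countably compact, then $(X,d^\star)$ is totally bounded.
   Context: A $t$-definer is a function $\star:[0,\infty)\times[0,\infty)\to[0,\infty)$ such that for all $a,b,c\ge 0$: $a\star b=b\star a$; $a\star(b\star c)=(a\star b)\star c$; if $a\le b$ then $a\star c\le b\star c$; $a\star 0=a$; and $\star$ is continuous in its first variable with respect to the Euclidean topology. Given a nonempty set $X$ and a $t$-definer $\star$, a $\star$-metric on $X$ is a function $d^\star:X\times X\to[0,\infty)$ such that for all $x,y,z\in X$: $d^\star(x,y)=0$ iff $x=y$; $d^\star(x,y)=d^\star(y,x)$; and $d^\star(x,y)\le d^\star(x,z)\star d^\star(z,y)$. Put $B_{d^\star}(a,r)=\{x\in X: d^\star(a,x)<r\}$ and let $\mathscr{T}_{d^\star}$ be the topology consisting of all $U\subseteq X$ such that for each $a\in U$ some $B_{d^\star}(a,r)$, $r>0$, is contained in $U$. A space is countably compact if every countable open cover has a finite subcover. $(X,d^\star)$ is totally bounded if for every $\epsilon>0$ there is a finite $F\subseteq X$ with $X=\bigcup_{x\in F}B_{d^\star}(x,\epsilon)$. *)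

theory Defs
  imports "HOL-Analysis.Analysis"
begin

(* A t-definer: a binary operation on [0,\<infinity>) (represented on real, relativised to {0..}). *)
definition t_definer :: "(real \<Rightarrow> real \<Rightarrow> real) \<Rightarrow> bool" where
  "t_definer st \<longleftrightarrow>
     (\<forall>a\<ge>0. \<forall>b\<ge>0. st a b \<ge> 0) \<and>
     (\<forall>a\<ge>0. \<forall>b\<ge>0. st a b = st b a) \<and>
     (\<forall>a\<ge>0. \<forall>b\<ge>0. \<forall>c\<ge>0. st a (st b c) = st (st a b) c) \<and>
     (\<forall>a\<ge>0. \<forall>b\<ge>0. \<forall>c\<ge>0. a \<le> b \<longrightarrow> st a c \<le> st b c) \<and>
     (\<forall>a\<ge>0. st a 0 = a) \<and>
     (\<forall>b\<ge>0. continuous_on {0..} (\<lambda>a. st a b))"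

definition star_metric :: "'a set \<Rightarrow> (real \<Rightarrow> real \<Rightarrow> real) \<Rightarrow> ('a \<Rightarrow> 'a \<Rightarrow> real) \<Rightarrow> bool" where
  "star_metric X st d \<longleftrightarrow>
     (\<forall>x\<in>X. \<forall>y\<in>X. d x y \<ge> 0) \<and>
     (\<forall>x\<in>X. \<forall>y\<in>X. d x y = 0 \<longleftrightarrow> x = y) \<and>
     (\<forall>x\<in>X. \<forall>y\<in>X. d x y = d y x) \<and>
     (\<forall>x\<in>X. \<forall>y\<in>X. \<forall>z\<in>X. d x y \<le> st (d x z) (d z y))"

definition sball :: "'a set \<Rightarrow> ('a \<Rightarrow> 'a \<Rightarrow> real) \<Rightarrow> 'a \<Rightarrow> real \<Rightarrow> 'a set" where
  "sball X d a r = {x\<in>X. d a x < r}"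

definition sopen :: "'a set \<Rightarrow> ('a \<Rightarrow> 'a \<Rightarrow> real) \<Rightarrow> 'a set \<Rightarrow> bool" where
  "sopen X d U \<longleftrightarrow> U \<subseteq> X \<and> (\<forall>a\<in>U. \<exists>r>0. sball X d a r \<subseteq> U)"

definition scountably_compact :: "'a set \<Rightarrow> ('a \<Rightarrow> 'a \<Rightarrow> real) \<Rightarrow> bool" where
  "scountably_compact X d \<longleftrightarrow>
     (\<forall>\<U>. countable \<U> \<and> (\<forall>U\<in>\<U>. sopen X d U) \<and> X \<subseteq> \<Union>\<U> \<longrightarrow>
        (\<exists>\<F>. \<F> \<subseteq> \<U> \<and> finite \<F> \<and> X \<subseteq> \<Union>\<F>))"

definition stotally_bounded :: "'a set \<Rightarrow> ('a \<Rightarrow> 'a \<Rightarrow> real) \<Rightarrow> bool" where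
  "stotally_bounded X d \<longleftrightarrow>
     (\<forall>\<epsilon>>0. \<exists>F. finite F \<and> F \<subseteq> X \<and> X = (\<Union>x\<in>F. sball X d x \<epsilon>))"

end

theory Submission
  imports Defs
begin

fun pts :: "('a set \<Rightarrow> 'a) \<Rightarrow> nat \<Rightarrow> 'a list" where
  "pts g 0 = []"
| "pts g (Suc n) = pts g n @ [g (set (pts g n))]"

lemma pts_set: "set (pts g n) = (\<lambda>i. g (set (pts g i))) ` {..<n}"
  by (induction n) (auto simp: lessThan_Suc)

lemma td_comm: assumes "t_definer st" "0 \<le> a" "0 \<le> b" shows "st a b = st b a"
proof -
  have "\<forall>a\<ge>0. \<forall>b\<ge>0. st a b = st b a" using assms(1) unfolding t_definer_def by (elim conjE)
  then show ?thesis using assms(2,3) by blast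
qed

lemma td_mono: assumes "t_definer st" "0 \<le> a" "0 \<le> b" "0 \<le> c" "a \<le> b" shows "st a c \<le> st b c"
proof -
  have "\<forall>a\<ge>0. \<forall>b\<ge>0. \<forall>c\<ge>0. a \<le> b \<longrightarrow> st a c \<le> st b c" using assms(1) unfolding t_definer_def by (elim conjE)
  then show ?thesis using assms(2-) by blast
qed

lemma td_zero: assumes "t_definer st" "0 \<le> a" shows "st a 0 = a"
proof -
  have "\<forall>a\<ge>0. st a 0 = a" using assms(1) unfolding t_definer_def by (elim conjE)
  then show ?thesis using assms(2) by blast
qed

lemma td_cont: assumes "t_definer st" "0 \<le> b" shows "continuous_on {0..} (\<lambda>a. st a b)"
proof -
  have "\<forall>b\<ge>0. continuous_on {0..} (\<lambda>a. st a b)" using assms(1) unfolding t_definer_def by (elim conjE)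
  then show ?thesis using assms(2) by blast
qed

lemma cont_at0:
  assumes "t_definer st" "a \<ge> 0" "st 0 a < r"
  shows "\<exists>\<delta>>0. \<forall>t. 0 \<le> t \<and> t < \<delta> \<longrightarrow> st t a < r"
proof -
  have c: "continuous_on {0..} (\<lambda>t. st t a)" using td_cont[OF assms(1,2)] .
  obtain \<delta> where d: "\<delta>>0" "\<forall>x'\<in>{0..}. dist x' 0 < \<delta> \<longrightarrow> dist (st x' a) (st 0 a) < r - st 0 a"
    using c[unfolded continuous_on_iff] assms(3) by (metis atLeast_iff diff_gt_0_iff_gt order_refl)
  show ?thesis
  proof (intro exI[of _ \<delta>] conjI allI impI)
    fix t assume "0 \<le> t \<and> t < \<delta>"
    then have "dist (st t a) (st 0 a) < r - st 0 a" using d(2) by (auto simp: dist_real_def)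
    then show "st t a < r" by (auto simp: dist_real_def)
  qed (use d in auto)
qed

lemma st0: "t_definer st \<Longrightarrow> a \<ge> 0 \<Longrightarrow> st 0 a = a"
  using td_comm[of st 0 a] td_zero[of st a] by simp

lemma sm_facts:
  assumes "star_metric X st d"
  shows "\<And>x y. x \<in> X \<Longrightarrow> y \<in> X \<Longrightarrow> d x y \<ge> 0"
    and "\<And>x y. x \<in> X \<Longrightarrow> y \<in> X \<Longrightarrow> d x y = 0 \<longleftrightarrow> x = y"
    and "\<And>x y. x \<in> X \<Longrightarrow> y \<in> X \<Longrightarrow> d x y = d y x"
    and "\<And>x y z. x \<in> X \<Longrightarrow> y \<in> X \<Longrightarrow> z \<in> X \<Longrightarrow> d x y \<le> st (d x z) (d z y)"
proof -
  have h: "(\<forall>x\<in>X. \<forall>y\<in>X. d x y \<ge> 0)" "(\<forall>x\<in>X. \<forall>y\<in>X. d x y = 0 \<longleftrightarrow> x = y)"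
     "(\<forall>x\<in>X. \<forall>y\<in>X. d x y = d y x)" "(\<forall>x\<in>X. \<forall>y\<in>X. \<forall>z\<in>X. d x y \<le> st (d x z) (d z y))"
    using assms unfolding star_metric_def by auto
  show "\<And>x y. x \<in> X \<Longrightarrow> y \<in> X \<Longrightarrow> d x y \<ge> 0" using h(1) by blast
  show "\<And>x y. x \<in> X \<Longrightarrow> y \<in> X \<Longrightarrow> d x y = 0 \<longleftrightarrow> x = y" using h(2) by blast
  show "\<And>x y. x \<in> X \<Longrightarrow> y \<in> X \<Longrightarrow> d x y = d y x" using h(3) by blast
  show "\<And>x y z. x \<in> X \<Longrightarrow> y \<in> X \<Longrightarrow> z \<in> X \<Longrightarrow> d x y \<le> st (d x z) (d z y)" using h(4) by blast
qed

lemma ball_open: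
  assumes T: "t_definer st" and M: "star_metric X st d" and yX: "y \<in> X"
  shows "sopen X d (sball X d y r)"
  unfolding sopen_def
proof (intro conjI ballI)
  note dpos = sm_facts(1)[OF M] and tri = sm_facts(4)[OF M]
  have cm: "\<And>a b. 0 \<le> a \<Longrightarrow> 0 \<le> b \<Longrightarrow> st a b = st b a" using td_comm[OF T] by blast
  show "sball X d y r \<subseteq> X" by (auto simp: sball_def)
  fix z assume z: "z \<in> sball X d y r"
  hence zX: "z \<in> X" and a: "d y z < r" by (auto simp: sball_def)
  have a0: "d y z \<ge> 0" using dpos yX zX by blast
  have "st 0 (d y z) < r" using st0[OF T a0] a by simp
  from cont_at0[OF T a0 this] obtain \<delta> where dl: "\<delta>>0" "\<And>t. 0 \<le> t \<Longrightarrow> t < \<delta> \<Longrightarrow> st t (d y z) < r"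
    by blast
  show "\<exists>s>0. sball X d z s \<subseteq> sball X d y r"
  proof (intro exI[of _ \<delta>] conjI subsetI)
    fix w assume "w \<in> sball X d z \<delta>"
    hence wX: "w \<in> X" and w: "d z w < \<delta>" by (auto simp: sball_def)
    have w0: "d z w \<ge> 0" using dpos zX wX by blast
    have "d y w \<le> st (d y z) (d z w)" using tri yX zX wX by blast
    also have "\<dots> = st (d z w) (d y z)" using cm a0 w0 by simp
    also have "\<dots> < r" using dl(2)[OF w0 w] .
    finally show "w \<in> sball X d y r" using wX by (auto simp: sball_def)
  qed (use dl in auto)
qed

theorem corollary3p3:
  fixes X :: "'a set" and st :: "real \<Rightarrow> real \<Rightarrow> real" and d :: "'a \<Rightarrow> 'a \<Rightarrow> real"
  assumes "X \<noteq> {}"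
    and "t_definer st"
    and "star_metric X st d"
    and "scountably_compact X d"
  shows "stotally_bounded X d"
proof (rule ccontr)
  note T = assms(2) and M = assms(3)
  assume "\<not> stotally_bounded X d"
  then obtain \<epsilon> where e: "\<epsilon> > 0" and nb: "\<And>F. finite F \<Longrightarrow> F \<subseteq> X \<Longrightarrow> X \<noteq> (\<Union>x\<in>F. sball X d x \<epsilon>)"
    unfolding stotally_bounded_def by (metis (no_types, lifting))
  have ex: "\<exists>y. y \<in> X \<and> (\<forall>x\<in>F. \<epsilon> \<le> d x y)" if "finite F" "F \<subseteq> X" for F
  proof -
    have "(\<Union>x\<in>F. sball X d x \<epsilon>) \<subseteq> X" by (auto simp: sball_def)
    with nb[OF that] obtain y where "y \<in> X" "y \<notin> (\<Union>x\<in>F. sball X d x \<epsilon>)" by blast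
    then show ?thesis by (auto simp: sball_def not_less)
  qed
  define g where "g = (\<lambda>S. SOME y. y \<in> X \<and> (\<forall>x\<in>S. \<epsilon> \<le> d x y))"
  define xs where "xs = (\<lambda>i. g (set (pts g i)))"
  have gS: "g S \<in> X \<and> (\<forall>x\<in>S. \<epsilon> \<le> d x (g S))" if "finite S" "S \<subseteq> X" for S
    unfolding g_def using someI_ex[OF ex[OF that]] .
  have ps: "set (pts g n) = xs ` {..<n}" for n unfolding xs_def by (rule pts_set)
  have xsX: "xs n \<in> X \<and> (\<forall>i<n. \<epsilon> \<le> d (xs i) (xs n))" for n
  proof (induction n rule: less_induct)
    case (less n)
    have "xs ` {..<n} \<subseteq> X" using less by auto
    then have "finite (set (pts g n))" "set (pts g n) \<subseteq> X" using ps by auto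
    from gS[OF this] have "g (set (pts g n)) \<in> X \<and> (\<forall>x\<in>xs ` {..<n}. \<epsilon> \<le> d x (g (set (pts g n))))"
      unfolding ps .
    moreover have "xs n = g (set (pts g n))" by (simp add: xs_def)
    ultimately show ?case by auto
  qed
  have sep: "\<epsilon> \<le> d (xs i) (xs j)" if "i \<noteq> j" for i j
  proof (cases "i < j")
    case True then show ?thesis using xsX by blast
  next
    case False
    then have "j < i" using that by auto
    then have "\<epsilon> \<le> d (xs j) (xs i)" using xsX by blast
    then show ?thesis using sm_facts(3)[OF M] xsX by metis
  qed
  have h0: "\<epsilon>/2 \<ge> 0" "st 0 (\<epsilon>/2) < \<epsilon>" using e st0[OF T, of "\<epsilon>/2"] by auto
  obtain \<delta> where dl: "\<delta>>0" "\<forall>t. 0 \<le> t \<and> t < \<delta> \<longrightarrow> st t (\<epsilon>/2) < \<epsilon>"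
    using cont_at0[OF T h0] by blast
  define r where "r = min (\<delta>/2) (\<epsilon>/2)"
  have r0: "r > 0" using dl e by (simp add: r_def)
  have rr: "st r (\<epsilon>/2) < \<epsilon>" using dl r0 by (auto simp: r_def)
  have small: "st a b < \<epsilon>" if "0 \<le> a" "a < r" "0 \<le> b" "b < r" for a b
  proof -
    note m = td_mono[OF T] and cm = td_comm[OF T]
    have "st a b \<le> st r b" using m that by auto
    also have "\<dots> = st b r" using cm that r0 by auto
    also have "\<dots> \<le> st (\<epsilon>/2) r" using m that r0 by (auto simp: r_def)
    also have "\<dots> = st r (\<epsilon>/2)" using cm r0 e by auto
    finally show ?thesis using rr by auto
  qed
  note dpos = sm_facts(1)[OF M] and dsym = sm_facts(3)[OF M] and dz = sm_facts(2)[OF M] and tri = sm_facts(4)[OF M]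
  have one: "i = j" if "y \<in> X" "xs i \<in> sball X d y r" "xs j \<in> sball X d y r" for y i j
  proof (rule ccontr)
    assume "i \<noteq> j"
    then have "\<epsilon> \<le> d (xs i) (xs j)" by (rule sep)
    moreover have "d (xs i) (xs j) \<le> st (d (xs i) y) (d y (xs j))" using tri xsX that(1) by blast
    moreover have "st (d (xs i) y) (d y (xs j)) < \<epsilon>"
      using that dpos dsym xsX by (intro small) (auto simp: sball_def)
    ultimately show False by auto
  qed
  have self: "xs n \<in> sball X d (xs n) r" for n
  proof -
    have "xs n \<in> X" using xsX[of n] by (rule conjunct1)
    then have "d (xs n) (xs n) = 0" using dz[of "xs n" "xs n"] by simp
    then show ?thesis using r0 \<open>xs n \<in> X\<close> by (simp add: sball_def)
  qed
  define A where "A = range xs"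
  have openA: "sopen X d (X - A)"
    unfolding sopen_def
  proof (intro conjI ballI)
    fix y assume y: "y \<in> X - A"
    show "\<exists>s>0. sball X d y s \<subseteq> X - A"
    proof (cases "\<exists>n. xs n \<in> sball X d y r")
      case False
      then show ?thesis using r0 by (intro exI[of _ r]) (auto simp: A_def sball_def)
    next
      case True
      then obtain n where n: "xs n \<in> sball X d y r" by blast
      have "y \<noteq> xs n" using y by (auto simp: A_def)
      then have p: "d y (xs n) > 0" using dpos dz xsX y by (metis DiffD1 order_le_less)
      show ?thesis
      proof (intro exI[of _ "min r (d y (xs n))"] conjI subsetI)
        fix w assume w: "w \<in> sball X d y (min r (d y (xs n)))"
        have "w \<notin> A"
        proof
          assume "w \<in> A"
          then obtain m where m: "w = xs m" by (auto simp: A_def)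
          then have "xs m \<in> sball X d y r" using w by (auto simp: sball_def)
          then have "m = n" using one n y by blast
          then show False using w m by (auto simp: sball_def)
        qed
        then show "w \<in> X - A" using w by (auto simp: sball_def)
      qed (use p r0 in auto)
    qed
  qed auto
  define U where "U = insert (X - A) (range (\<lambda>n. sball X d (xs n) r))"
  have "countable U" unfolding U_def by simp
  moreover have "\<forall>V\<in>U. sopen X d V" unfolding U_def using openA ball_open[OF T M] xsX by auto
  moreover have "X \<subseteq> \<Union>U"
  proof
    fix x assume x: "x \<in> X"
    show "x \<in> \<Union>U"
    proof (cases "x \<in> A")
      case True
      then obtain n where n: "x = xs n" by (auto simp: A_def)
      note self
      moreover have "sball X d (xs n) r \<in> U" by (simp add: U_def)
      ultimately show ?thesis using n self[of n] by auto
    next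
      case False
      then have "x \<in> X - A" using x by simp
      moreover have "X - A \<in> U" by (simp add: U_def)
      ultimately show ?thesis by (intro UnionI)
    qed
  qed
  ultimately obtain F where F: "F \<subseteq> U" "finite F" "X \<subseteq> \<Union>F"
    using assms(4)[unfolded scountably_compact_def, rule_format, of U] by auto
  have inF: "sball X d (xs n) r \<in> F" for n
  proof -
    have "xs n \<in> X" using xsX[of n] by (rule conjunct1)
    then have "xs n \<in> \<Union>F" using F(3) by (rule subsetD[rotated])
    then obtain V where V: "V \<in> F" "xs n \<in> V" by (rule UnionE)
    then have "V \<noteq> X - A" by (auto simp: A_def)
    then obtain m where m: "V = sball X d (xs m) r" using V F(1) by (auto simp: U_def)
    have xmX: "xs m \<in> X" using xsX[of m] by (rule conjunct1)
    have "n = m" using one[OF xmX V(2)[unfolded m] self[of m]] .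
    then have "m = n" by simp
    then show ?thesis using V m by simp
  qed
  have "inj (\<lambda>n. sball X d (xs n) r)"
  proof (rule injI)
    fix m n assume eq: "sball X d (xs m) r = sball X d (xs n) r"
    have "xs m \<in> sball X d (xs m) r" "xs n \<in> sball X d (xs n) r" by (rule self)+
    have xmX: "xs m \<in> X" using xsX[of m] by (rule conjunct1)
    have "xs n \<in> sball X d (xs m) r" using eq self[of n] by simp
    from one[OF xmX self[of m] this] show "m = n" .
  qed
  then have "infinite (range (\<lambda>n. sball X d (xs n) r))" by (simp add: range_inj_infinite)
  moreover have "range (\<lambda>n. sball X d (xs n) r) \<subseteq> F" using inF by auto
  ultimately show False using F(2) finite_subset by blast
qed

end
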